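(* Let $T$ be a rank-$r$ tensor and $t$ a rank-$s$ tensor, and let $1\le i\le r$, $1\le j\le s$. If $T,t\in\mathcal{DP}$, or if $T,t\in-\mathcal{DP}$, then $(T\,{}_i\!\times_j t)\in\mathcal{DP}$. If $T\in\mathcal{DP}$ and $t\in-\mathcal{DP}$, then $(T\,{}_i\!\times_j t)\in-\mathcal{DP}$ and $(t\,{}_j\!\times_i T)\in-\mathcal{DP}$.
   Context: Lorentzian metric of signature $(+,-,\dots,-)$ with time orientation; causal: $v\ne0$, $v\cdot v\ge0$. $\mathcal{DP}$: tensors $X_{a_1\dots a_m}$ with $X_{a_1\dots a_m}u_1^{a_1}\cdots u_m^{a_m}\ge0$ for all causal future-pointing $u_k$ (rank 0: non-negative reals); $-\mathcal{DP}=\{X:-X\in\mathcal{DP}\}$. The product $(T\,{}_i\!\times_j t)_{a_1\dots a_{r+s-2}}=T_{a_1\dots a_{i-1}ba_i\dots a_{r-1}}\,t_{a_r\dots a_{r+j-2}}{}^{b}{}_{a_{r+j-1}\dots a_{r+s-2}}$ contracts the $i$-th index of $T$ with the $j$-th index of $t$. *)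

theory Defs
  imports Complex_Main
begin

text \<open>Spacetime of dimension d, in an orthonormal frame: index 0 is the time
direction, the metric is eta = diag(1,-1,...,-1).  Vectors are given by their
contravariant components (functions nat => real, only indices < d matter).
A rank-r tensor is given by its covariant components X a_1 ... a_r, encoded as a
function on index lists (only lists of length r with entries < d matter).\<close>

definition eta :: "nat \<Rightarrow> real" where
  "eta a = (if a = 0 then 1 else -1)"

definition mink :: "nat \<Rightarrow> (nat \<Rightarrow> real) \<Rightarrow> (nat \<Rightarrow> real) \<Rightarrow> real" where
  "mink d u v = (\<Sum>a<d. eta a * u a * v a)"

definition causal :: "nat \<Rightarrow> (nat \<Rightarrow> real) \<Rightarrow> bool" where
  "causal d u \<longleftrightarrow> (\<exists>a<d. u a \<noteq> 0) \<and> mink d u u \<ge> 0"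

definition future_pointing :: "(nat \<Rightarrow> real) \<Rightarrow> bool" where
  "future_pointing u \<longleftrightarrow> u 0 > 0"

definition idx_lists :: "nat \<Rightarrow> nat \<Rightarrow> nat list set" where
  "idx_lists d r = {as. length as = r \<and> set as \<subseteq> {..<d}}"

definition tensor_eval :: "nat \<Rightarrow> nat \<Rightarrow> (nat list \<Rightarrow> real) \<Rightarrow> (nat \<Rightarrow> nat \<Rightarrow> real) \<Rightarrow> real" where
  "tensor_eval d r X us = (\<Sum>as\<in>idx_lists d r. X as * (\<Prod>k<r. us k (as ! k)))"

definition DP :: "nat \<Rightarrow> nat \<Rightarrow> (nat list \<Rightarrow> real) \<Rightarrow> bool" where
  "DP d r X \<longleftrightarrow> (\<forall>us. (\<forall>k<r. causal d (us k) \<and> future_pointing (us k))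
                          \<longrightarrow> tensor_eval d r X us \<ge> 0)"

definition negDP :: "nat \<Rightarrow> nat \<Rightarrow> (nat list \<Rightarrow> real) \<Rightarrow> bool" where
  "negDP d r X \<longleftrightarrow> DP d r (\<lambda>as. - X as)"

text \<open>(T i\<times>j t)_{a_1..a_{r+s-2}} = T_{a_1..a_{i-1} b a_i..a_{r-1}} t_{a_r..a_{r+j-2}}^b_{a_{r+j-1}..a_{r+s-2}},
  where r is the rank of T; the raised index is t^b = eta^{bc} t_c.\<close>
definition contr :: "nat \<Rightarrow> nat \<Rightarrow> nat \<Rightarrow> nat \<Rightarrow> (nat list \<Rightarrow> real) \<Rightarrow> (nat list \<Rightarrow> real) \<Rightarrow> (nat list \<Rightarrow> real)" where
  "contr d r i j T t = (\<lambda>as.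
     let xs = take (r - 1) as; ys = drop (r - 1) as in
     (\<Sum>b<d. T (take (i - 1) xs @ [b] @ drop (i - 1) xs) * eta b *
              t (take (j - 1) ys @ [b] @ drop (j - 1) ys)))"

end

theory Submission
  imports Defs
begin

definition ins :: "nat \<Rightarrow> nat \<Rightarrow> nat list \<Rightarrow> nat list" where
  "ins p b xs = take p xs @ [b] @ drop p xs"

lemma finite_L: "finite (idx_lists d r)"
  unfolding idx_lists_def using finite_lists_length_eq[of "{..<d}" r] by (simp add: conj_commute)

lemma sum_split:
  "(\<Sum>as\<in>idx_lists d (m+n). f as) = (\<Sum>xs\<in>idx_lists d m. \<Sum>ys\<in>idx_lists d n. f (xs@ys))"
proof -
  have inj: "inj_on (\<lambda>(xs,ys). xs@ys) (idx_lists d m \<times> idx_lists d n)"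
    by (auto simp: inj_on_def idx_lists_def)
  have img: "(\<lambda>(xs,ys). xs@ys) ` (idx_lists d m \<times> idx_lists d n) = idx_lists d (m+n)"
  proof
    show "(\<lambda>(xs,ys). xs@ys) ` (idx_lists d m \<times> idx_lists d n) \<subseteq> idx_lists d (m+n)"
      by (auto simp: idx_lists_def)
    show "idx_lists d (m+n) \<subseteq> (\<lambda>(xs,ys). xs@ys) ` (idx_lists d m \<times> idx_lists d n)"
    proof
      fix as assume a: "as \<in> idx_lists d (m+n)"
      have "as = (\<lambda>(xs,ys). xs@ys) (take m as, drop m as)" by simp
      moreover have "(take m as, drop m as) \<in> idx_lists d m \<times> idx_lists d n"
        using a by (auto simp: idx_lists_def dest: in_set_takeD in_set_dropD)
      ultimately show "as \<in> (\<lambda>(xs,ys). xs@ys) ` (idx_lists d m \<times> idx_lists d n)" by blast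
    qed
  qed
  have "(\<Sum>as\<in>idx_lists d (m+n). f as) = (\<Sum>p\<in>idx_lists d m \<times> idx_lists d n. f ((\<lambda>(xs,ys). xs@ys) p))"
    using sum.reindex[OF inj, of f] img by simp
  also have "\<dots> = (\<Sum>xs\<in>idx_lists d m. \<Sum>ys\<in>idx_lists d n. f (xs@ys))"
    by (simp add: sum.cartesian_product split_def)
  finally show ?thesis .
qed

lemma ins_nth_lt: "k < p \<Longrightarrow> p \<le> length xs \<Longrightarrow> ins p b xs ! k = xs ! k"
  by (simp add: ins_def nth_append)
lemma ins_nth_eq: "p \<le> length xs \<Longrightarrow> ins p b xs ! p = b"
  by (simp add: ins_def nth_append)
lemma ins_nth_gt: "p \<le> k \<Longrightarrow> k < length xs \<Longrightarrow> ins p b xs ! Suc k = xs ! k"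
  by (simp add: ins_def nth_append)

lemma sum_ins:
  assumes "p \<le> m"
  shows "(\<Sum>as\<in>idx_lists d (Suc m). f as) = (\<Sum>xs\<in>idx_lists d m. \<Sum>b<d. f (ins p b xs))"
proof -
  have inj: "inj_on (\<lambda>(xs,b). ins p b xs) (idx_lists d m \<times> {..<d})"
  proof (rule inj_onI, clarsimp)
    fix xs b xs' b'
    assume "xs \<in> idx_lists d m" "xs' \<in> idx_lists d m" "ins p b xs = ins p b' xs'"
    then have l: "length xs = m" "length xs' = m" and e: "take p xs @ [b] @ drop p xs = take p xs' @ [b'] @ drop p xs'"
      by (auto simp: idx_lists_def ins_def)
    have "length (take p xs) = length (take p xs')" using l by simp
    with e have "take p xs = take p xs'" "b = b'" "drop p xs = drop p xs'" by auto
    then show "xs = xs' \<and> b = b'" by (metis append_take_drop_id)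
  qed
  have img: "(\<lambda>(xs,b). ins p b xs) ` (idx_lists d m \<times> {..<d}) = idx_lists d (Suc m)"
  proof
    show "(\<lambda>(xs,b). ins p b xs) ` (idx_lists d m \<times> {..<d}) \<subseteq> idx_lists d (Suc m)"
      using assms by (auto simp: idx_lists_def ins_def dest!: in_set_takeD in_set_dropD)
    show "idx_lists d (Suc m) \<subseteq> (\<lambda>(xs,b). ins p b xs) ` (idx_lists d m \<times> {..<d})"
    proof
      fix as assume a: "as \<in> idx_lists d (Suc m)"
      have l: "length as = Suc m" using a by (simp add: idx_lists_def)
      have "as ! p \<in> set as" using l assms by (intro nth_mem) simp
      then have ap: "as ! p < d" using a by (auto simp: idx_lists_def)
      have "as = (\<lambda>(xs,b). ins p b xs) (take p as @ drop (Suc p) as, as ! p)"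
        using assms l by (simp add: ins_def) (metis Cons_nth_drop_Suc append_take_drop_id le_imp_less_Suc)
      moreover have "(take p as @ drop (Suc p) as, as ! p) \<in> idx_lists d m \<times> {..<d}"
        using a assms l ap by (auto simp: idx_lists_def dest!: in_set_takeD in_set_dropD)
      ultimately show "as \<in> (\<lambda>(xs,b). ins p b xs) ` (idx_lists d m \<times> {..<d})" by blast
    qed
  qed
  have "(\<Sum>as\<in>idx_lists d (Suc m). f as) = (\<Sum>q\<in>idx_lists d m \<times> {..<d}. f ((\<lambda>(xs,b). ins p b xs) q))"
    using sum.reindex[OF inj, of f] img by simp
  also have "\<dots> = (\<Sum>xs\<in>idx_lists d m. \<Sum>b<d. f (ins p b xs))"
    by (simp add: sum.cartesian_product split_def)
  finally show ?thesis .
qed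

lemma prod_append:
  "length xs = m \<Longrightarrow> (\<Prod>k<m+n. g k ((xs@ys)!k)) = (\<Prod>k<m. g k (xs!k)) * (\<Prod>k<n. g (m+k) (ys!k))"
proof (induction n)
  case 0
  then show ?case by (auto intro!: prod.cong simp: nth_append)
next
  case (Suc n)
  then show ?case by (simp add: nth_append mult.assoc)
qed

lemma prod_ins:
  "p \<le> m \<Longrightarrow> (\<Prod>k<Suc m. g k) = g p * (\<Prod>k<m. g (if k<p then k else Suc k))"
proof (induction m)
  case 0
  then show ?case by simp
next
  case (Suc m)
  show ?case
  proof (cases "p \<le> m")
    case True
    then show ?thesis using Suc by (simp add: mult_ac)
  next
    case False
    then have "p = Suc m" using Suc by simp
    then show ?thesis by (simp add: mult_ac)
  qed
qed


lemma cone: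
  assumes DPX: "DP d (Suc m) X" and pm: "p \<le> m"
    and u: "\<forall>k<m. causal d (u k) \<and> future_pointing (u k)"
    and w: "causal d w" "future_pointing w"
  shows "0 \<le> (\<Sum>b<d. (\<Sum>xs\<in>idx_lists d m. X (ins p b xs) * (\<Prod>k<m. u k (xs!k))) * w b)"
proof -
  define U where "U k = (if k<p then u k else if k=p then w else u (k-1))" for k
  have "\<forall>k<Suc m. causal d (U k) \<and> future_pointing (U k)"
    using u w pm by (auto simp: U_def)
  then have "0 \<le> tensor_eval d (Suc m) X U" using DPX by (simp add: DP_def)
  also have "tensor_eval d (Suc m) X U
      = (\<Sum>xs\<in>idx_lists d m. \<Sum>b<d. X (ins p b xs) * (\<Prod>k<Suc m. U k (ins p b xs ! k)))"
    unfolding tensor_eval_def by (rule sum_ins[OF pm])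
  also have "\<dots> = (\<Sum>xs\<in>idx_lists d m. \<Sum>b<d. X (ins p b xs) * (w b * (\<Prod>k<m. u k (xs!k))))"
  proof (intro sum.cong refl)
    fix xs b assume xs: "xs \<in> idx_lists d m"
    then have l: "length xs = m" by (simp add: idx_lists_def)
    have "(\<Prod>k<Suc m. U k (ins p b xs ! k))
        = U p (ins p b xs ! p) * (\<Prod>k<m. (\<lambda>k. U k (ins p b xs ! k)) (if k<p then k else Suc k))"
      by (rule prod_ins[OF pm])
    also have "\<dots> = w b * (\<Prod>k<m. u k (xs!k))"
      using l pm by (auto intro!: prod.cong simp: U_def ins_nth_lt ins_nth_eq ins_nth_gt)
    finally show "X (ins p b xs) * (\<Prod>k<Suc m. U k (ins p b xs ! k)) = X (ins p b xs) * (w b * (\<Prod>k<m. u k (xs!k)))"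
      by simp
  qed
  also have "\<dots> = (\<Sum>b<d. (\<Sum>xs\<in>idx_lists d m. X (ins p b xs) * (\<Prod>k<m. u k (xs!k))) * w b)"
    by (subst sum.swap) (simp add: sum_distrib_left sum_distrib_right mult_ac)
  finally show ?thesis .
qed

lemma sum_0_split: "1 \<le> (d::nat) \<Longrightarrow> (\<Sum>a<d. f a) = f 0 + (\<Sum>a\<in>{1..<d}. f a)"
proof -
  assume "1 \<le> d"
  then have "{..<d} = insert 0 {1..<d}" by (auto; presburger)
  then show ?thesis by simp
qed

lemma lorentz:
  assumes d: "1 \<le> d"
    and A: "\<forall>w. causal d w \<and> future_pointing w \<longrightarrow> 0 \<le> (\<Sum>b<d. A b * w b)"
    and B: "\<forall>w. causal d w \<and> future_pointing w \<longrightarrow> 0 \<le> (\<Sum>b<d. B b * w b)"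
  shows "0 \<le> (\<Sum>b<d. eta b * A b * B b)"
proof -
  define e0 where "e0 = (\<lambda>a::nat. if a = 0 then (1::real) else 0)"
  have ce0: "causal d e0 \<and> future_pointing e0"
    using d by (auto simp: causal_def future_pointing_def e0_def mink_def eta_def if_distrib cong: if_cong)
  have "(\<Sum>b<d. A b * e0 b) = A 0" using d by (simp add: e0_def if_distrib cong: if_cong)
  then have A0: "0 \<le> A 0" using A ce0 by metis
  have "(\<Sum>b<d. B b * e0 b) = B 0" using d by (simp add: e0_def if_distrib cong: if_cong)
  then have B0: "0 \<le> B 0" using B ce0 by metis
  have eq: "(\<Sum>b<d. eta b * A b * B b) = A 0 * B 0 - (\<Sum>a\<in>{1..<d}. A a * B a)"
    using d by (simp add: sum_0_split eta_def sum_negf)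
  define n where "n = sqrt (\<Sum>a\<in>{1..<d}. (B a)^2)"
  have n0: "0 \<le> n" unfolding n_def by (simp add: sum_nonneg)
  have n2: "n^2 = (\<Sum>a\<in>{1..<d}. (B a)^2)" unfolding n_def by (simp add: sum_nonneg)
  show ?thesis
  proof (cases "n = 0")
    case True
    then have "\<forall>a\<in>{1..<d}. B a = 0" using n2 by (simp add: sum_nonneg_eq_0_iff)
    then have "(\<Sum>a\<in>{1..<d}. A a * B a) = 0" by simp
    then show ?thesis using eq A0 B0 by simp
  next
    case False
    then have np: "0 < n" using n0 by simp
    define w where "w = (\<lambda>a::nat. if a = 0 then n else - B a)"
    have "mink d w w = n^2 - (\<Sum>a\<in>{1..<d}. (B a)^2)"
      using d by (simp add: mink_def sum_0_split w_def eta_def power2_eq_square sum_negf)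
    then have "causal d w \<and> future_pointing w"
      using d np n2 by (auto simp: causal_def future_pointing_def w_def)
    then have hA: "0 \<le> (\<Sum>b<d. A b * w b)" and hB: "0 \<le> (\<Sum>b<d. B b * w b)" using A B by auto
    have "(\<Sum>b<d. A b * w b) = A 0 * n - (\<Sum>a\<in>{1..<d}. A a * B a)"
      using d by (simp add: sum_0_split w_def sum_negf)
    with hA have 1: "(\<Sum>a\<in>{1..<d}. A a * B a) \<le> A 0 * n" by simp
    have "(\<Sum>b<d. B b * w b) = B 0 * n - n^2"
      using d n2 by (simp add: sum_0_split w_def sum_negf power2_eq_square)
    with hB have "n^2 \<le> B 0 * n" by simp
    then have "n \<le> B 0" using np by (simp add: power2_eq_square)
    then have "A 0 * n \<le> A 0 * B 0" using A0 by (simp add: mult_left_mono)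
    then show ?thesis using eq 1 by simp
  qed
qed


lemma main_DP:
  assumes DT: "DP d r T" and Dt: "DP d s t" and d: "1 \<le> d"
    and i: "1 \<le> i" "i \<le> r" and j: "1 \<le> j" "j \<le> s"
  shows "DP d (r + s - 2) (contr d r i j T t)"
proof -
  obtain m where r: "r = Suc m" using i by (cases r) auto
  obtain n where s: "s = Suc n" using j by (cases s) auto
  define p where "p = i - 1"
  define q where "q = j - 1"
  have pm: "p \<le> m" and qn: "q \<le> n" using i j r s by (auto simp: p_def q_def)
  have rs: "r + s - 2 = m + n" using r s by simp
  show ?thesis unfolding DP_def rs
  proof (intro allI impI)
    fix us assume H: "\<forall>k<m+n. causal d (us k) \<and> future_pointing (us k)"
    define A where "A b = (\<Sum>xs\<in>idx_lists d m. T (ins p b xs) * (\<Prod>k<m. us k (xs!k)))" for b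
    define B where "B b = (\<Sum>ys\<in>idx_lists d n. t (ins q b ys) * (\<Prod>k<n. us (m+k) (ys!k)))" for b
    have hA: "\<forall>w. causal d w \<and> future_pointing w \<longrightarrow> 0 \<le> (\<Sum>b<d. A b * w b)"
      unfolding A_def using cone[of d m T p us] DT r pm H by auto
    have hB: "\<forall>w. causal d w \<and> future_pointing w \<longrightarrow> 0 \<le> (\<Sum>b<d. B b * w b)"
      unfolding B_def using cone[of d n t q "\<lambda>k. us (m+k)"] Dt s qn H by auto
    have "tensor_eval d (m+n) (contr d r i j T t) us
        = (\<Sum>xs\<in>idx_lists d m. \<Sum>ys\<in>idx_lists d n.
             contr d r i j T t (xs@ys) * (\<Prod>k<m+n. us k ((xs@ys)!k)))"
      unfolding tensor_eval_def by (rule sum_split)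
    also have "\<dots> = (\<Sum>xs\<in>idx_lists d m. \<Sum>ys\<in>idx_lists d n. \<Sum>b<d.
             eta b * (T (ins p b xs) * (\<Prod>k<m. us k (xs!k))) * (t (ins q b ys) * (\<Prod>k<n. us (m+k) (ys!k))))"
    proof (intro sum.cong refl)
      fix xs ys assume xs: "xs \<in> idx_lists d m" and ys: "ys \<in> idx_lists d n"
      have l: "length xs = m" using xs by (simp add: idx_lists_def)
      have c: "contr d r i j T t (xs@ys) = (\<Sum>b<d. T (ins p b xs) * eta b * t (ins q b ys))"
        using l r pm by (simp add: contr_def ins_def p_def q_def min_absorb1)
      show "contr d r i j T t (xs@ys) * (\<Prod>k<m+n. us k ((xs@ys)!k)) = (\<Sum>b<d.
             eta b * (T (ins p b xs) * (\<Prod>k<m. us k (xs!k))) * (t (ins q b ys) * (\<Prod>k<n. us (m+k) (ys!k))))"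
        unfolding c prod_append[OF l] sum_distrib_right by (rule sum.cong) (simp_all add: mult_ac)
    qed
    also have "\<dots> = (\<Sum>b<d. eta b * A b * B b)"
      unfolding A_def B_def
      by (simp add: sum_distrib_left sum_distrib_right mult_ac sum.swap[of _ "{..<d}"])
    finally have "tensor_eval d (m+n) (contr d r i j T t) us = (\<Sum>b<d. eta b * A b * B b)" .
    then show "0 \<le> tensor_eval d (m+n) (contr d r i j T t) us"
      using lorentz[OF d hA hB] by simp
  qed
qed

lemma contr_neg_both: "contr d r i j (\<lambda>as. - T as) (\<lambda>as. - t as) = contr d r i j T t"
  by (simp add: contr_def)
lemma contr_neg_r: "contr d r i j T (\<lambda>as. - t as) = (\<lambda>as. - contr d r i j T t as)"
  by (simp add: contr_def Let_def sum_negf)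
lemma contr_neg_l: "contr d r i j (\<lambda>as. - T as) t = (\<lambda>as. - contr d r i j T t as)"
  by (simp add: contr_def Let_def sum_negf)

theorem mainTheorem18:
  fixes d r s i j :: nat and T t :: "nat list \<Rightarrow> real"
  assumes "2 \<le> d" and "1 \<le> i" and "i \<le> r" and "1 \<le> j" and "j \<le> s"
  shows "((DP d r T \<and> DP d s t) \<or> (negDP d r T \<and> negDP d s t)
            \<longrightarrow> DP d (r + s - 2) (contr d r i j T t))
       \<and> (DP d r T \<and> negDP d s t
            \<longrightarrow> negDP d (r + s - 2) (contr d r i j T t)
              \<and> negDP d (s + r - 2) (contr d s j i t T))"
proof -
  have d: "1 \<le> d" using assms by simp
  have 1: "DP d (r + s - 2) (contr d r i j T t)" if "DP d r T \<and> DP d s t"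
    using main_DP[OF _ _ d assms(2-5)] that by blast
  have 2: "DP d (r + s - 2) (contr d r i j T t)" if "negDP d r T \<and> negDP d s t"
    using main_DP[OF _ _ d assms(2-5), of "\<lambda>as. - T as" "\<lambda>as. - t as"] that
    by (simp add: negDP_def contr_neg_both)
  have 3: "negDP d (r + s - 2) (contr d r i j T t) \<and> negDP d (s + r - 2) (contr d s j i t T)"
    if "DP d r T \<and> negDP d s t"
  proof
    show "negDP d (r + s - 2) (contr d r i j T t)"
      using main_DP[OF _ _ d assms(2-5), of T "\<lambda>as. - t as"] that
      by (simp add: negDP_def contr_neg_r)
    show "negDP d (s + r - 2) (contr d s j i t T)"
      using main_DP[OF _ _ d assms(4,5,2,3), of "\<lambda>as. - t as" T] that
      by (simp add: negDP_def contr_neg_l)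
  qed
  show ?thesis using 1 2 3 by blast
qed

end
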